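(* The spaces $H^{1/2}(\mathbb{Z})$ and $\tilde H^{1/2}(\mathbb{R})$ are identical, with equivalent norms: there is a constant $c>0$ such that for every locally $L^2$ function $f$ on $\mathbb{R}$, $$c^{-1}\|f\|_{\tilde H^{1/2}(\mathbb{R})}^2\le \|f\|_{H^{1/2}(\mathbb{Z})}^2\le c\,\|f\|_{\tilde H^{1/2}(\mathbb{R})}^2 .$$
   Context: For a locally $L^2$ function $f$ on $\mathbb{R}$ (modulo constants), $\|f\|_{\tilde H^{1/2}(\mathbb{R})}^2=\iint_{|x-y|\le 1}\frac{|f(x)-f(y)|^2}{|x-y|^2}\,dx\,dy$, and $\tilde H^{1/2}(\mathbb{R})$ is the space where this is finite. $H^{1/2}(\mathbb{Z})$ is the Sobolev space of the metric graph with vertices $\mathbb{Z}$ and edges $[k,k+1]$ of length $1$, i.e. the space of locally $L^2$ functions (modulo constants) with finite norm $$\|f\|_{H^{1/2}(\mathbb{Z})}^2=\sum_{k\in\mathbb{Z}}\int_k^{k+1}\int_k^{k+1}\frac{|f(x)-f(y)|^2}{|x-y|^2}\,dx\,dy+\sum_{k\in\mathbb{Z}}\int_0^1\frac{|f(k+t)-f(k-t)|^2}{t}\,dt.$$ *)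

theory Defs
  imports "HOL-Analysis.Analysis"
begin

definition locally_L2 :: "(real \<Rightarrow> complex) \<Rightarrow> bool" where
  "locally_L2 f \<longleftrightarrow> f \<in> borel_measurable lborel \<and>
     (\<forall>K. compact K \<longrightarrow>
        (\<integral>\<^sup>+ x. indicator K x * ennreal ((cmod (f x))\<^sup>2) \<partial>lborel) < \<infinity>)"

definition H_tilde_R_sq :: "(real \<Rightarrow> complex) \<Rightarrow> ennreal" where
  "H_tilde_R_sq f =
     (\<integral>\<^sup>+ p. indicator {p. \<bar>fst p - snd p\<bar> \<le> 1} p *
        ennreal ((cmod (f (fst p) - f (snd p)))\<^sup>2 / (fst p - snd p)\<^sup>2)
      \<partial>(lborel \<Otimes>\<^sub>M lborel))"

text \<open>Squared norm of H^{1/2}(Z), the metric graph with vertices Z and unit edges.\<close>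
definition H_Z_sq :: "(real \<Rightarrow> complex) \<Rightarrow> ennreal" where
  "H_Z_sq f =
     (\<integral>\<^sup>+ k. (\<integral>\<^sup>+ p. indicator ({real_of_int k..real_of_int k + 1} \<times> {real_of_int k..real_of_int k + 1}) p *
        ennreal ((cmod (f (fst p) - f (snd p)))\<^sup>2 / (fst p - snd p)\<^sup>2)
      \<partial>(lborel \<Otimes>\<^sub>M lborel)) \<partial>count_space (UNIV :: int set))
   + (\<integral>\<^sup>+ k. (\<integral>\<^sup>+ t. indicator {0..1} t *
        ennreal ((cmod (f (real_of_int k + t) - f (real_of_int k - t)))\<^sup>2 / t) \<partial>lborel)
      \<partial>count_space (UNIV :: int set))"

end

theory Submission
  imports Defs
begin


abbreviation "BB \<equiv> (borel \<Otimes>\<^sub>M borel :: (real \<times> real) measure)"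

lemma meas_pair_borel:
  fixes h :: "real \<times> real \<Rightarrow> ennreal"
  assumes "h \<in> borel_measurable BB"
  shows "h \<in> borel_measurable (lborel \<Otimes>\<^sub>M lborel)"
  using assms by (simp add: measurable_cong_sets[OF sets_pair_measure_cong[OF sets_lborel sets_lborel] refl])

lemma swap2:
  fixes h :: "real \<Rightarrow> real \<Rightarrow> ennreal"
  assumes "case_prod h \<in> borel_measurable BB"
  shows "(\<integral>\<^sup>+x. \<integral>\<^sup>+y. h x y \<partial>lborel \<partial>lborel) = (\<integral>\<^sup>+y. \<integral>\<^sup>+x. h x y \<partial>lborel \<partial>lborel)"
  using lborel_pair.Fubini'[OF meas_pair_borel[OF assms]] by simp

lemma inner_meas:
  fixes h :: "real \<Rightarrow> real \<Rightarrow> ennreal"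
  assumes "case_prod h \<in> borel_measurable BB"
  shows "(\<lambda>x. \<integral>\<^sup>+y. h x y \<partial>lborel) \<in> borel_measurable borel"
proof -
  have "(\<lambda>x. \<integral>\<^sup>+y. h x y \<partial>lborel) \<in> borel_measurable lborel"
    by (rule lborel.borel_measurable_nn_integral[OF meas_pair_borel[OF assms]])
  then show ?thesis by (simp add: measurable_cong_sets[OF sets_lborel refl])
qed

lemma iter_eq_prod:
  fixes h :: "real \<times> real \<Rightarrow> ennreal"
  assumes "h \<in> borel_measurable BB"
  shows "integral\<^sup>N (lborel \<Otimes>\<^sub>M lborel) h = (\<integral>\<^sup>+x. \<integral>\<^sup>+y. h (x,y) \<partial>lborel \<partial>lborel)"
  using lborel.nn_integral_fst[OF meas_pair_borel[OF assms]] by simp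

lemma slice_meas:
  fixes h :: "real \<Rightarrow> real \<Rightarrow> ennreal"
  assumes [measurable]: "case_prod h \<in> borel_measurable BB"
  shows "h x \<in> borel_measurable borel"
proof -
  have "(\<lambda>y. case_prod h (x,y)) \<in> borel_measurable borel" by measurable
  then show ?thesis by simp
qed

lemma aff2:
  fixes h :: "real \<Rightarrow> real \<Rightarrow> ennreal"
  assumes meas[measurable]: "case_prod h \<in> borel_measurable BB" and c: "\<bar>c\<bar> = 1" and d: "\<bar>d\<bar> = 1"
  shows "(\<integral>\<^sup>+x. \<integral>\<^sup>+y. h x y \<partial>lborel \<partial>lborel) = (\<integral>\<^sup>+x. \<integral>\<^sup>+y. h (a + c*x) (b + d*y) \<partial>lborel \<partial>lborel)"
proof -
  have c0: "c \<noteq> 0" and d0: "d \<noteq> 0" using c d by auto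
  have "(\<integral>\<^sup>+x. \<integral>\<^sup>+y. h x y \<partial>lborel \<partial>lborel) = (\<integral>\<^sup>+x. \<integral>\<^sup>+y. h x (b + d*y) \<partial>lborel \<partial>lborel)"
    apply (rule nn_integral_cong)
    subgoal for x using nn_integral_real_affine[OF slice_meas[OF meas, of x] d0, of b] d by simp
    done
  also have "\<dots> = (\<integral>\<^sup>+x. \<integral>\<^sup>+y. h (a + c*x) (b + d*y) \<partial>lborel \<partial>lborel)"
  proof -
    have m: "case_prod (\<lambda>x y. h x (b + d*y)) \<in> borel_measurable BB"
    proof -
      have "(\<lambda>p. case_prod h (fst p, b + d * snd p)) \<in> borel_measurable BB" by measurable
      then show ?thesis by (simp add: case_prod_beta')
    qed
    show ?thesis using nn_integral_real_affine[OF inner_meas[OF m] c0, of a] c by simp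
  qed
  finally show ?thesis .
qed

lemma inner_aff:
  fixes h :: "real \<Rightarrow> real \<Rightarrow> ennreal"
  assumes meas: "case_prod h \<in> borel_measurable BB" and d: "\<bar>d\<bar> = 1"
  shows "(\<integral>\<^sup>+x. \<integral>\<^sup>+y. h x y \<partial>lborel \<partial>lborel) = (\<integral>\<^sup>+x. \<integral>\<^sup>+y. h x (\<phi> x + d*y) \<partial>lborel \<partial>lborel)"
proof -
  have d0: "d \<noteq> 0" using d by auto
  show ?thesis
    apply (rule nn_integral_cong)
    subgoal for x using nn_integral_real_affine[OF slice_meas[OF meas, of x] d0, of "\<phi> x"] d by simp
    done
qed

definition gg :: "(real \<Rightarrow> complex) \<Rightarrow> real \<Rightarrow> real \<Rightarrow> real" where
  "gg f x y = (cmod (f x - f y))\<^sup>2"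
definition ww :: "(real \<Rightarrow> complex) \<Rightarrow> real \<Rightarrow> real \<Rightarrow> ennreal" where
  "ww f x y = ennreal (gg f x y / (x - y)\<^sup>2)"

lemma ww_meas[measurable]:
  assumes [measurable]: "f \<in> borel_measurable borel" "u \<in> borel_measurable M" "v \<in> borel_measurable M"
  shows "(\<lambda>z. ww f (u z) (v z)) \<in> borel_measurable M"
  unfolding ww_def gg_def by measurable

lemma gg_meas[measurable]:
  assumes [measurable]: "f \<in> borel_measurable borel" "u \<in> borel_measurable M" "v \<in> borel_measurable M"
  shows "(\<lambda>z. gg f (u z) (v z)) \<in> borel_measurable M"
  unfolding gg_def by measurable

lemma test:
  assumes [measurable]: "f \<in> borel_measurable borel"
  shows "case_prod (\<lambda>x y. indicator {0..1::real} x * indicator {p::real\<times>real. \<bar>fst p - snd p\<bar> \<le> 1} (x, y) * ww f (a + x) (- y)) \<in> borel_measurable BB"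
  by measurable



lemma gg_nonneg: "0 \<le> gg f x y" by (simp add: gg_def)
lemma gg_same[simp]: "gg f x x = 0" by (simp add: gg_def)
lemma gg_sym: "gg f x y = gg f y x" by (simp add: gg_def norm_minus_commute)

lemma sq_tri2: "(a::real) \<le> b + c \<Longrightarrow> 0 \<le> a \<Longrightarrow> a\<^sup>2 \<le> 2*b\<^sup>2 + 2*c\<^sup>2"
proof -
  assume "a \<le> b + c" "0 \<le> a"
  then have "a\<^sup>2 \<le> (b+c)\<^sup>2" by (simp add: power_mono)
  moreover have "0 \<le> (b-c)\<^sup>2" by simp
  ultimately show ?thesis by (simp add: power2_eq_square algebra_simps)
qed

lemma sq_tri3: "(a::real) \<le> b + c + d \<Longrightarrow> 0 \<le> a \<Longrightarrow> a\<^sup>2 \<le> 3*b\<^sup>2 + 3*c\<^sup>2 + 3*d\<^sup>2"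
proof -
  assume "a \<le> b + c + d" "0 \<le> a"
  then have "a\<^sup>2 \<le> (b+c+d)\<^sup>2" by (simp add: power_mono)
  moreover have "0 \<le> (b-c)\<^sup>2" "0 \<le> (b-d)\<^sup>2" "0 \<le> (c-d)\<^sup>2" by simp_all
  ultimately show ?thesis by (simp add: power2_eq_square algebra_simps)
qed

lemma gg_tri: "gg f x z \<le> 2 * gg f x y + 2 * gg f y z"
  unfolding gg_def
  by (rule sq_tri2) (auto intro: norm_diff_triangle_le)

lemma gg_tri3: "gg f x w \<le> 3 * gg f x y + 3 * gg f y z + 3 * gg f z w"
proof -
  have "cmod (f x - f w) \<le> cmod (f x - f y) + cmod (f y - f z) + cmod (f z - f w)"
  proof -
    have "cmod (f x - f w) \<le> cmod (f x - f y) + cmod (f y - f w)" by (rule norm_diff_triangle_le) auto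
    moreover have "cmod (f y - f w) \<le> cmod (f y - f z) + cmod (f z - f w)" by (rule norm_diff_triangle_le) auto
    ultimately show ?thesis by linarith
  qed
  then show ?thesis unfolding gg_def by (rule sq_tri3) simp
qed

lemma div_le_div_gg: "0 \<le> (G::real) \<Longrightarrow> 0 < d \<Longrightarrow> d \<le> D \<Longrightarrow> G / D \<le> G / d"
  by (simp add: frac_le)



lemma cross_half:
  assumes "0 \<le> s" "s \<le> t"
  shows "gg f t (-s) / (s+t)\<^sup>2 \<le> 2 * (gg f t (-t) / t\<^sup>2) + 2 * (gg f (-t) (-s) / (t-s)\<^sup>2)"
proof (cases "t = 0")
  case True
  then have "s = 0" using assms by simp
  then show ?thesis using True by simp
next
  case False
  then have t0: "0 < t" using assms by simp
  have n1: "0 \<le> gg f t (-t)" "0 \<le> gg f (-t) (-s)" by (simp_all add: gg_nonneg)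
  have tri: "gg f t (-s) / (s+t)\<^sup>2 \<le> (2 * gg f t (-t) + 2 * gg f (-t) (-s)) / (s+t)\<^sup>2"
    by (rule divide_right_mono[OF gg_tri]) simp
  also have "\<dots> = 2 * (gg f t (-t) / (s+t)\<^sup>2) + 2 * (gg f (-t) (-s) / (s+t)\<^sup>2)"
    by (simp add: add_divide_distrib)
  also have "\<dots> \<le> 2 * (gg f t (-t) / t\<^sup>2) + 2 * (gg f (-t) (-s) / (t-s)\<^sup>2)"
  proof -
    have "gg f t (-t) / (s+t)\<^sup>2 \<le> gg f t (-t) / t\<^sup>2"
      using t0 assms by (intro frac_le n1) (auto intro: power_mono)
    moreover have "gg f (-t) (-s) / (s+t)\<^sup>2 \<le> gg f (-t) (-s) / (t-s)\<^sup>2"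
    proof (cases "s = t")
      case True then show ?thesis by simp
    next
      case False
      then show ?thesis using t0 assms by (intro frac_le n1) (auto intro: power_mono)
    qed
    ultimately show ?thesis by simp
  qed
  finally show ?thesis .
qed

lemma cross_real:
  assumes "0 \<le> s" "0 \<le> t"
  shows "gg f (-s) t / (-s - t)\<^sup>2 \<le> 2 * (if s \<le> t then gg f t (-t) / t\<^sup>2 else gg f s (-s) / s\<^sup>2)
     + 2 * (gg f (-t) (-s) / (-t - -s)\<^sup>2) + 2 * (gg f t s / (t - s)\<^sup>2)"
proof -
  have e1: "(-s - t)\<^sup>2 = (s+t)\<^sup>2" by (simp add: power2_eq_square algebra_simps)
  have e2: "(-t - -s)\<^sup>2 = (t-s)\<^sup>2" by (simp add: power2_eq_square algebra_simps)
  have nn: "0 \<le> gg f (-t) (-s) / (t-s)\<^sup>2" "0 \<le> gg f t s / (t - s)\<^sup>2"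
    "0 \<le> gg f s (-s) / s\<^sup>2" "0 \<le> gg f t (-t) / t\<^sup>2"
    by (simp_all add: gg_nonneg)
  show ?thesis
  proof (cases "s \<le> t")
    case True
    from cross_half[OF assms(1) True, of f] show ?thesis
      using nn True by (simp add: e1 e2 gg_sym[of f "-s" t] power2_commute[of s t])
  next
    case False
    then have "t \<le> s" by simp
    from cross_half[OF assms(2) this, of "\<lambda>x. f (-x)"] have
      "gg f (-s) t / (t+s)\<^sup>2 \<le> 2 * (gg f (-s) s / s\<^sup>2) + 2 * (gg f s t / (s-t)\<^sup>2)"
      by (simp add: gg_def)
    moreover have "(s-t)\<^sup>2 = (t-s)\<^sup>2" by (simp add: power2_eq_square algebra_simps)
    ultimately show ?thesis
      using nn False by (simp add: e1 e2 gg_sym[of f "-s" s] gg_sym[of f s t] add.commute)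
  qed
qed



lemma II_add:
  fixes h1 h2 :: "real \<Rightarrow> real \<Rightarrow> ennreal"
  assumes m1[measurable]: "case_prod h1 \<in> borel_measurable BB" and m2[measurable]: "case_prod h2 \<in> borel_measurable BB"
  shows "(\<integral>\<^sup>+x. \<integral>\<^sup>+y. h1 x y + h2 x y \<partial>lborel \<partial>lborel) = (\<integral>\<^sup>+x. \<integral>\<^sup>+y. h1 x y \<partial>lborel \<partial>lborel) + (\<integral>\<^sup>+x. \<integral>\<^sup>+y. h2 x y \<partial>lborel \<partial>lborel)"
proof -
  have "(\<integral>\<^sup>+x. \<integral>\<^sup>+y. h1 x y + h2 x y \<partial>lborel \<partial>lborel) = (\<integral>\<^sup>+x. (\<integral>\<^sup>+y. h1 x y \<partial>lborel) + (\<integral>\<^sup>+y. h2 x y \<partial>lborel) \<partial>lborel)"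
    by (rule nn_integral_cong, rule nn_integral_add) (auto intro: slice_meas[OF m1] slice_meas[OF m2])
  also have "\<dots> = (\<integral>\<^sup>+x. \<integral>\<^sup>+y. h1 x y \<partial>lborel \<partial>lborel) + (\<integral>\<^sup>+x. \<integral>\<^sup>+y. h2 x y \<partial>lborel \<partial>lborel)"
    by (rule nn_integral_add) (auto intro: inner_meas[OF m1] inner_meas[OF m2])
  finally show ?thesis .
qed

lemma II_cmult:
  fixes h :: "real \<Rightarrow> real \<Rightarrow> ennreal"
  assumes m[measurable]: "case_prod h \<in> borel_measurable BB"
  shows "(\<integral>\<^sup>+x. \<integral>\<^sup>+y. c * h x y \<partial>lborel \<partial>lborel) = c * (\<integral>\<^sup>+x. \<integral>\<^sup>+y. h x y \<partial>lborel \<partial>lborel)"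
proof -
  have "(\<integral>\<^sup>+x. \<integral>\<^sup>+y. c * h x y \<partial>lborel \<partial>lborel) = (\<integral>\<^sup>+x. c * (\<integral>\<^sup>+y. h x y \<partial>lborel) \<partial>lborel)"
    by (rule nn_integral_cong, rule nn_integral_cmult) (auto intro: slice_meas[OF m])
  also have "\<dots> = c * (\<integral>\<^sup>+x. \<integral>\<^sup>+y. h x y \<partial>lborel \<partial>lborel)"
    by (rule nn_integral_cmult) (auto intro: inner_meas[OF m])
  finally show ?thesis .
qed

lemma II_mono:
  fixes h1 h2 :: "real \<Rightarrow> real \<Rightarrow> ennreal"
  assumes "\<And>x y. h1 x y \<le> h2 x y"
  shows "(\<integral>\<^sup>+x. \<integral>\<^sup>+y. h1 x y \<partial>lborel \<partial>lborel) \<le> (\<integral>\<^sup>+x. \<integral>\<^sup>+y. h2 x y \<partial>lborel \<partial>lborel)"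
  by (intro nn_integral_mono assms)

definition V0 :: "(real \<Rightarrow> complex) \<Rightarrow> ennreal" where
  "V0 f = (\<integral>\<^sup>+t. indicator {0..1} t * ennreal (gg f t (-t) / t) \<partial>lborel)"

lemma V0_iter:
  assumes [measurable]: "f \<in> borel_measurable borel"
  shows "(\<integral>\<^sup>+u. \<integral>\<^sup>+v. indicator {0..1} u * indicator {0..1} v *
      (if v \<le> u then ennreal (gg f u (-u) / u\<^sup>2) else 0) \<partial>lborel \<partial>lborel) = V0 f"
  unfolding V0_def
proof (rule nn_integral_cong)
  fix u :: real
  show "(\<integral>\<^sup>+v. indicator {0..1} u * indicator {0..1} v *
      (if v \<le> u then ennreal (gg f u (-u) / u\<^sup>2) else 0) \<partial>lborel) = indicator {0..1} u * ennreal (gg f u (-u) / u)"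
  proof (cases "u \<in> {0..1}")
    case False then show ?thesis by simp
  next
    case True
    have "(\<integral>\<^sup>+v. indicator {0..1} u * indicator {0..1} v *
      (if v \<le> u then ennreal (gg f u (-u) / u\<^sup>2) else 0) \<partial>lborel)
      = (\<integral>\<^sup>+v. ennreal (gg f u (-u) / u\<^sup>2) * indicator {0..u} v \<partial>lborel)"
      using True by (intro nn_integral_cong) (auto split: split_indicator)
    also have "\<dots> = ennreal (gg f u (-u) / u\<^sup>2) * ennreal u"
      using True by (subst nn_integral_cmult_indicator) auto
    also have "\<dots> = ennreal (gg f u (-u) / u)"
      using True by (simp add: ennreal_mult'[symmetric] gg_nonneg power2_eq_square)
    finally show ?thesis using True by simp
  qed
qed



definition Sq :: "real \<Rightarrow> (real \<Rightarrow> complex) \<Rightarrow> ennreal" where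
  "Sq a f = (\<integral>\<^sup>+x. \<integral>\<^sup>+y. indicator {a..a+1} x * indicator {a..a+1} y * ww f x y \<partial>lborel \<partial>lborel)"

definition X0 :: "(real \<Rightarrow> complex) \<Rightarrow> ennreal" where
  "X0 f = (\<integral>\<^sup>+x. \<integral>\<^sup>+y. indicator {-1..0} x * indicator {0..1} y * ww f x y \<partial>lborel \<partial>lborel)"

lemma ennreal_3le:
  assumes "a \<le> 2*b + 2*c + 2*d" "0\<le>b" "0\<le>c" "0\<le>d"
  shows "ennreal a \<le> 2*ennreal b + 2*ennreal c + 2*ennreal d"
proof -
  have "ennreal a \<le> ennreal (2*b + 2*c + 2*d)" using assms(1) by (rule ennreal_leI)
  also have "\<dots> = 2*ennreal b + 2*ennreal c + 2*ennreal d"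
    using assms(2-4) by (simp add: ennreal_plus ennreal_mult)
  finally show ?thesis .
qed

lemma cross_pt:
  "indicator {-1..0} (-s) * indicator {0..1} t * ww f (-s) t \<le>
     2 * (indicator {0..1} s * indicator {0..1} t * (if t \<le> s then ennreal (gg f s (-s) / s\<^sup>2) else 0))
   + 2 * (indicator {0..1} t * indicator {0..1} s * (if s \<le> t then ennreal (gg f t (-t) / t\<^sup>2) else 0))
   + 2 * (indicator {-1..0} (-t) * indicator {-1..0} (-s) * ww f (-t) (-s))
   + 2 * (indicator {0..1} t * indicator {0..1} s * ww f t s)"
proof (cases "s \<in> {0..1} \<and> t \<in> {0..1}")
  case False
  then have z: "indicator {-1..0} (-s) * indicator {0..1} t * ww f (-s) t = (0::ennreal)"
    by (auto split: split_indicator)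
  show ?thesis by (subst z) simp
next
  case True
  then have s: "0 \<le> s" and t: "0 \<le> t" by auto
  have ind: "indicator {-1..0} (-s) = (1::ennreal)" "indicator {0..1} t = (1::ennreal)"
    "indicator {-1..0} (-t) = (1::ennreal)" "indicator {0..1} s = (1::ennreal)"
    using True by (auto split: split_indicator)
  have h1: "ww f (-s) t \<le> 2 * ennreal (if s \<le> t then gg f t (-t) / t\<^sup>2 else gg f s (-s) / s\<^sup>2)
     + 2 * ww f (-t) (-s) + 2 * ww f t s"
    unfolding ww_def by (rule ennreal_3le[OF cross_real[OF s t]]) (auto simp: gg_nonneg)
  have h2: "ennreal (if s \<le> t then gg f t (-t) / t\<^sup>2 else gg f s (-s) / s\<^sup>2) \<le>
      (if t \<le> s then ennreal (gg f s (-s) / s\<^sup>2) else 0) + (if s \<le> t then ennreal (gg f t (-t) / t\<^sup>2) else 0)"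
    by auto
  have "ww f (-s) t \<le> 2 * ((if t \<le> s then ennreal (gg f s (-s) / s\<^sup>2) else 0) + (if s \<le> t then ennreal (gg f t (-t) / t\<^sup>2) else 0))
     + 2 * ww f (-t) (-s) + 2 * ww f t s"
    by (rule order_trans[OF h1]) (intro add_right_mono mult_left_mono h2, simp)
  then show ?thesis by (simp add: ind distrib_left add.assoc)
qed

lemma cross:
  assumes fm[measurable]: "f \<in> borel_measurable borel"
  shows "X0 f \<le> 4 * V0 f + 2 * Sq (-1) f + 2 * Sq 0 f"
proof -
  define H1 where "H1 = (\<lambda>s t. indicator {0..1} s * indicator {0..1} t * (if t \<le> s then ennreal (gg f s (-s) / s\<^sup>2) else (0::ennreal)))"
  define H2 where "H2 = (\<lambda>s t. indicator {0..1} t * indicator {0..1} s * (if s \<le> t then ennreal (gg f t (-t) / t\<^sup>2) else (0::ennreal)))"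
  define H3 where "H3 = (\<lambda>s t. indicator {-1..0} (-t) * indicator {-1..0} (-s) * ww f (-t) (-s) :: ennreal)"
  define H4 where "H4 = (\<lambda>s t. indicator {0..1} t * indicator {0..1} s * ww f t s :: ennreal)"
  have m1[measurable]: "case_prod H1 \<in> borel_measurable BB" unfolding H1_def by measurable
  have m2[measurable]: "case_prod H2 \<in> borel_measurable BB" unfolding H2_def by measurable
  have m3[measurable]: "case_prod H3 \<in> borel_measurable BB" unfolding H3_def by measurable
  have m4[measurable]: "case_prod H4 \<in> borel_measurable BB" unfolding H4_def by measurable
  have mX: "case_prod (\<lambda>x y. indicator {-1..0} x * indicator {0..1} y * ww f x y :: ennreal) \<in> borel_measurable BB"
    by measurable
  have "X0 f = (\<integral>\<^sup>+s. \<integral>\<^sup>+t. indicator {-1..0} (-s) * indicator {0..1} t * ww f (-s) t \<partial>lborel \<partial>lborel)"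
    unfolding X0_def using aff2[OF mX, of "-1" 1 0 0] by simp
  also have "\<dots> \<le> (\<integral>\<^sup>+s. \<integral>\<^sup>+t. 2 * H1 s t + 2 * H2 s t + 2 * H3 s t + 2 * H4 s t \<partial>lborel \<partial>lborel)"
    by (rule II_mono) (unfold H1_def H2_def H3_def H4_def, rule cross_pt)
  also have "\<dots> = 2 * (\<integral>\<^sup>+s. \<integral>\<^sup>+t. H1 s t \<partial>lborel \<partial>lborel) + 2 * (\<integral>\<^sup>+s. \<integral>\<^sup>+t. H2 s t \<partial>lborel \<partial>lborel)
     + 2 * (\<integral>\<^sup>+s. \<integral>\<^sup>+t. H3 s t \<partial>lborel \<partial>lborel) + 2 * (\<integral>\<^sup>+s. \<integral>\<^sup>+t. H4 s t \<partial>lborel \<partial>lborel)"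
    by (subst II_add, measurable)+ (simp add: II_cmult)
  also have "(\<integral>\<^sup>+s. \<integral>\<^sup>+t. H1 s t \<partial>lborel \<partial>lborel) = V0 f"
    unfolding H1_def by (rule V0_iter[OF fm])
  also have "(\<integral>\<^sup>+s. \<integral>\<^sup>+t. H2 s t \<partial>lborel \<partial>lborel) = V0 f"
    unfolding swap2[OF m2] unfolding H2_def by (rule V0_iter[OF fm])
  also have "(\<integral>\<^sup>+s. \<integral>\<^sup>+t. H3 s t \<partial>lborel \<partial>lborel) = Sq (-1) f"
  proof -
    have mS: "case_prod (\<lambda>x y. indicator {-1..0} x * indicator {-1..0} y * ww f x y :: ennreal) \<in> borel_measurable BB"
      by measurable
    have mS': "case_prod (\<lambda>x y. indicator {-1..0} (-x) * indicator {-1..0} (-y) * ww f (-x) (-y) :: ennreal) \<in> borel_measurable BB"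
      by measurable
    have "Sq (-1) f = (\<integral>\<^sup>+x. \<integral>\<^sup>+y. indicator {-1..0} x * indicator {-1..0} y * ww f x y \<partial>lborel \<partial>lborel)"
      by (simp add: Sq_def)
    also have "\<dots> = (\<integral>\<^sup>+x. \<integral>\<^sup>+y. indicator {-1..0} (-x) * indicator {-1..0} (-y) * ww f (-x) (-y) \<partial>lborel \<partial>lborel)"
      using aff2[OF mS, of "-1" "-1" 0 0] by simp
    also have "\<dots> = (\<integral>\<^sup>+y. \<integral>\<^sup>+x. indicator {-1..0} (-x) * indicator {-1..0} (-y) * ww f (-x) (-y) \<partial>lborel \<partial>lborel)"
      by (rule swap2[OF mS'])
    finally show ?thesis by (simp add: H3_def)
  qed
  also have "(\<integral>\<^sup>+s. \<integral>\<^sup>+t. H4 s t \<partial>lborel \<partial>lborel) = Sq 0 f"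
  proof -
    have mS: "case_prod (\<lambda>x y. indicator {0..0+1} x * indicator {0..0+1} y * ww f x y :: ennreal) \<in> borel_measurable BB"
      by measurable
    show ?thesis unfolding Sq_def swap2[OF mS] by (simp add: H4_def mult.commute mult.left_commute)
  qed
  also have "2 * V0 f + 2 * V0 f + 2 * Sq (-1) f + 2 * Sq 0 f = 4 * V0 f + 2 * Sq (-1) f + 2 * Sq 0 f"
    by (subst distrib_right[symmetric]) simp
  finally show ?thesis .
qed



definition Strip :: "(real \<times> real) set" where "Strip = {p. \<bar>fst p - snd p\<bar> \<le> 1}"

definition Q :: "(real \<Rightarrow> complex) \<Rightarrow> real \<Rightarrow> real \<Rightarrow> ennreal" where
  "Q f x y = indicator {-2..2} x * indicator {-2..2} y * indicator Strip (x,y) * ww f x y"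

lemma Q_meas[measurable]:
  assumes [measurable]: "f \<in> borel_measurable borel" "u \<in> borel_measurable M" "v \<in> borel_measurable M"
  shows "(\<lambda>z. Q f (u z) (v z)) \<in> borel_measurable M"
  unfolding Q_def Strip_def by measurable

definition B0 :: "(real \<Rightarrow> complex) \<Rightarrow> ennreal" where
  "B0 f = (\<integral>\<^sup>+x. \<integral>\<^sup>+y. Q f x y \<partial>lborel \<partial>lborel)"

lemma Vpart:
  assumes "0 \<le> a" "b \<le> 1"
  shows "(\<integral>\<^sup>+u. \<integral>\<^sup>+v. indicator {a..b} u * indicator {0..1} v *
      (if v \<le> u then ennreal (gg f u (-u) / u\<^sup>2) else 0) \<partial>lborel \<partial>lborel)
    = (\<integral>\<^sup>+u. indicator {a..b} u * ennreal (gg f u (-u) / u) \<partial>lborel)"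
proof (rule nn_integral_cong)
  fix u :: real
  show "(\<integral>\<^sup>+v. indicator {a..b} u * indicator {0..1} v *
      (if v \<le> u then ennreal (gg f u (-u) / u\<^sup>2) else 0) \<partial>lborel) = indicator {a..b} u * ennreal (gg f u (-u) / u)"
  proof (cases "u \<in> {a..b}")
    case False then show ?thesis by simp
  next
    case True
    then have u: "0 \<le> u" "u \<le> 1" using assms by auto
    have "(\<integral>\<^sup>+v. indicator {a..b} u * indicator {0..1} v *
      (if v \<le> u then ennreal (gg f u (-u) / u\<^sup>2) else 0) \<partial>lborel)
      = (\<integral>\<^sup>+v. ennreal (gg f u (-u) / u\<^sup>2) * indicator {0..u} v \<partial>lborel)"
      using True u by (intro nn_integral_cong) (auto split: split_indicator)
    also have "\<dots> = ennreal (gg f u (-u) / u\<^sup>2) * ennreal u"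
      using u by (subst nn_integral_cmult_indicator) auto
    also have "\<dots> = ennreal (gg f u (-u) / u)"
      using u by (simp add: ennreal_mult'[symmetric] gg_nonneg power2_eq_square)
    finally show ?thesis using True by simp
  qed
qed

lemma small_real:
  assumes "0 \<le> s" "s \<le> t"
  shows "gg f t (-t) / t\<^sup>2 \<le> 8 * (gg f t (-s) / (t - -s)\<^sup>2) + 2 * (gg f (-s) (-t) / (-s - -t)\<^sup>2)"
proof (cases "t = 0")
  case True
  then have "s = 0" using assms by simp
  then show ?thesis using True by (simp add: gg_nonneg)
next
  case False
  then have t0: "0 < t" using assms by simp
  have e1: "(t - -s)\<^sup>2 = (t+s)\<^sup>2" and e2: "(-s - -t)\<^sup>2 = (t - s)\<^sup>2" by (simp_all add: power2_eq_square algebra_simps)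
  have n1: "0 \<le> gg f t (-s)" "0 \<le> gg f (-s) (-t)" by (simp_all add: gg_nonneg)
  have "gg f t (-t) / t\<^sup>2 \<le> (2 * gg f t (-s) + 2 * gg f (-s) (-t)) / t\<^sup>2"
    by (rule divide_right_mono[OF gg_tri]) simp
  also have "\<dots> = 2 * (gg f t (-s) / t\<^sup>2) + 2 * (gg f (-s) (-t) / t\<^sup>2)"
    by (simp add: add_divide_distrib)
  also have "\<dots> \<le> 8 * (gg f t (-s) / (t+s)\<^sup>2) + 2 * (gg f (-s) (-t) / (t-s)\<^sup>2)"
  proof -
    have "(t+s)\<^sup>2 \<le> (2*t)\<^sup>2" using assms by (intro power_mono) auto
    then have "(t+s)\<^sup>2 \<le> 4 * t\<^sup>2" by (simp add: power_mult_distrib)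
    then have "(4 * gg f t (-s)) / (4 * t\<^sup>2) \<le> (4 * gg f t (-s)) / (t+s)\<^sup>2"
      using t0 assms n1 by (intro frac_le) auto
    then have "gg f t (-s) / t\<^sup>2 \<le> 4 * (gg f t (-s) / (t+s)\<^sup>2)"
      by simp
    moreover have "gg f (-s) (-t) / t\<^sup>2 \<le> gg f (-s) (-t) / (t-s)\<^sup>2"
    proof (cases "s = t")
      case True then show ?thesis by simp
    next
      case False
      then show ?thesis using t0 assms by (intro frac_le n1) (auto intro: power_mono)
    qed
    ultimately show ?thesis by simp
  qed
  finally show ?thesis by (simp add: e1 e2)
qed



lemma gg_le_div:
  assumes "\<bar>x - y\<bar> \<le> 1"
  shows "gg f x y \<le> gg f x y / (x - y)\<^sup>2"
proof (cases "x = y")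
  case True then show ?thesis by simp
next
  case False
  then have d0: "0 < (x - y)\<^sup>2" by simp
  have "(x-y)\<^sup>2 \<le> 1" using assms by (simp add: abs_le_square_iff[symmetric] abs_square_le_1)
  then have "gg f x y * (x - y)\<^sup>2 \<le> gg f x y" using gg_nonneg[of f x y] by (simp add: mult_left_le)
  then show ?thesis using d0 by (simp add: le_divide_eq)
qed

lemma gg_le_Q:
  assumes "x \<in> {-2..2}" "y \<in> {-2..2}" "\<bar>x - y\<bar> \<le> 1"
  shows "ennreal (gg f x y) \<le> Q f x y"
  using assms gg_le_div[OF assms(3), of f] by (simp add: Q_def Strip_def ww_def ennreal_leI)

lemma ennreal_lin:
  "0 \<le> X \<Longrightarrow> 0 \<le> Y \<Longrightarrow> (0::real) \<le> a \<Longrightarrow> 0 \<le> b \<Longrightarrow>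
   ennreal (a * X + b * Y) = ennreal a * ennreal X + ennreal b * ennreal Y"
  by (simp add: ennreal_plus ennreal_mult)

lemma small_int:
  assumes fm[measurable]: "f \<in> borel_measurable borel"
  shows "(\<integral>\<^sup>+u. indicator {0..1/2} u * ennreal (gg f u (-u) / u) \<partial>lborel) \<le> 10 * B0 f"
proof -
  have mA[measurable]: "case_prod (\<lambda>u v. Q f u (-v)) \<in> borel_measurable BB" by measurable
  have mB[measurable]: "case_prod (\<lambda>u v. Q f (-v) (-u)) \<in> borel_measurable BB" by measurable
  have mQ[measurable]: "case_prod (\<lambda>u v. Q f u v) \<in> borel_measurable BB" by measurable
  have "(\<integral>\<^sup>+u. indicator {0..1/2} u * ennreal (gg f u (-u) / u) \<partial>lborel)
      = (\<integral>\<^sup>+u. \<integral>\<^sup>+v. indicator {0..1/2} u * indicator {0..1} v *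
      (if v \<le> u then ennreal (gg f u (-u) / u\<^sup>2) else 0) \<partial>lborel \<partial>lborel)"
    by (rule Vpart[symmetric]) auto
  also have "\<dots> \<le> (\<integral>\<^sup>+u. \<integral>\<^sup>+v. 8 * Q f u (-v) + 2 * Q f (-v) (-u) \<partial>lborel \<partial>lborel)"
  proof (rule II_mono)
    fix u v :: real
    show "indicator {0..1/2} u * indicator {0..1} v *
      (if v \<le> u then ennreal (gg f u (-u) / u\<^sup>2) else 0) \<le> 8 * Q f u (-v) + 2 * Q f (-v) (-u)"
    proof (cases "u \<in> {0..1/2} \<and> v \<in> {0..1} \<and> v \<le> u")
      case False
      then have z: "indicator {0..1/2} u * indicator {0..1} v *
        (if v \<le> u then ennreal (gg f u (-u) / u\<^sup>2) else 0) = (0::ennreal)"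
        by (auto split: split_indicator)
      show ?thesis by (subst z) simp
    next
      case True
      then have s: "0 \<le> v" "v \<le> u" by auto
      have "ennreal (gg f u (-u) / u\<^sup>2) \<le> ennreal (8 * (gg f u (-v) / (u - -v)\<^sup>2) + 2 * (gg f (-v) (-u) / (-v - -u)\<^sup>2))"
        by (rule ennreal_leI[OF small_real[OF s]])
      also have "\<dots> = 8 * Q f u (-v) + 2 * Q f (-v) (-u)"
        using True by (subst ennreal_lin) (simp_all add: Q_def Strip_def ww_def gg_nonneg)
      finally show ?thesis using True by simp
    qed
  qed
  also have "\<dots> = 8 * (\<integral>\<^sup>+u. \<integral>\<^sup>+v. Q f u (-v) \<partial>lborel \<partial>lborel) + 2 * (\<integral>\<^sup>+u. \<integral>\<^sup>+v. Q f (-v) (-u) \<partial>lborel \<partial>lborel)"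
    by (subst II_add, measurable) (simp add: II_cmult)
  also have "(\<integral>\<^sup>+u. \<integral>\<^sup>+v. Q f u (-v) \<partial>lborel \<partial>lborel) = B0 f"
    unfolding B0_def using aff2[OF mQ, of 1 "-1" 0 0] by simp
  also have "(\<integral>\<^sup>+u. \<integral>\<^sup>+v. Q f (-v) (-u) \<partial>lborel \<partial>lborel) = B0 f"
    unfolding B0_def swap2[OF mB] using aff2[OF mQ, of "-1" "-1" 0 0] by simp
  also have "8 * B0 f + 2 * B0 f = 10 * B0 f"
    by (subst distrib_right[symmetric]) simp
  finally show ?thesis .
qed



lemma large_pt:
  assumes u: "1/2 \<le> u" "u \<le> 1" and v: "0 \<le> v" "v \<le> 1/2"
  shows "ennreal (4 * gg f u (-u)) \<le> 12 * Q f u v + 12 * Q f v (v + 1/2 - u) + 12 * Q f (v + 1/2 - u) (-u)"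
proof -
  define p where "p = v + 1/2 - u"
  have "4 * gg f u (-u) \<le> 12 * gg f u v + 12 * gg f v p + 12 * gg f p (-u)"
    using gg_tri3[of f u "-u" v p] by simp
  then have "ennreal (4 * gg f u (-u)) \<le> ennreal (12 * gg f u v + 12 * gg f v p + 12 * gg f p (-u))"
    by (rule ennreal_leI)
  also have "\<dots> = 12 * ennreal (gg f u v) + 12 * ennreal (gg f v p) + 12 * ennreal (gg f p (-u))"
    by (simp add: ennreal_plus ennreal_mult gg_nonneg)
  also have "\<dots> \<le> 12 * Q f u v + 12 * Q f v p + 12 * Q f p (-u)"
    using u v unfolding p_def
    by (intro add_mono mult_left_mono gg_le_Q) auto
  finally show ?thesis unfolding p_def .
qed

lemma large_int:
  assumes fm[measurable]: "f \<in> borel_measurable borel"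
  shows "(\<integral>\<^sup>+u. indicator {1/2..1} u * ennreal (gg f u (-u) / u) \<partial>lborel) \<le> 36 * B0 f"
proof -
  have m1[measurable]: "case_prod (\<lambda>u v. Q f u v) \<in> borel_measurable BB" by measurable
  have m2[measurable]: "case_prod (\<lambda>u v. Q f v (v + 1/2 - u)) \<in> borel_measurable BB" by measurable
  have m3[measurable]: "case_prod (\<lambda>u v. Q f (v + 1/2 - u) (-u)) \<in> borel_measurable BB" by measurable
  have "(\<integral>\<^sup>+u. indicator {1/2..1} u * ennreal (gg f u (-u) / u) \<partial>lborel)
      \<le> (\<integral>\<^sup>+u. \<integral>\<^sup>+v. indicator {1/2..1} u * indicator {0..1/2::real} v * ennreal (4 * gg f u (-u)) \<partial>lborel \<partial>lborel)"
  proof (rule nn_integral_mono)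
    fix u :: real
    show "indicator {1/2..1} u * ennreal (gg f u (-u) / u) \<le>
      (\<integral>\<^sup>+v. indicator {1/2..1} u * indicator {0..1/2::real} v * ennreal (4 * gg f u (-u)) \<partial>lborel)"
    proof (cases "u \<in> {1/2..1}")
      case False then show ?thesis by simp
    next
      case True
      have "(\<integral>\<^sup>+v. indicator {1/2..1} u * indicator {0..1/2::real} v * ennreal (4 * gg f u (-u)) \<partial>lborel)
        = (\<integral>\<^sup>+v. ennreal (4 * gg f u (-u)) * indicator {0..1/2::real} v \<partial>lborel)"
        using True by (intro nn_integral_cong) (auto simp: mult.commute)
      also have "\<dots> = ennreal (4 * gg f u (-u)) * ennreal (1/2)"
        by (subst nn_integral_cmult_indicator) auto
      also have "\<dots> = ennreal (2 * gg f u (-u))"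
        by (subst ennreal_mult''[symmetric]) (auto simp: gg_nonneg)
      finally have eq: "(\<integral>\<^sup>+v. indicator {1/2..1} u * indicator {0..1/2::real} v * ennreal (4 * gg f u (-u)) \<partial>lborel)
         = ennreal (2 * gg f u (-u))" .
      have "gg f u (-u) / u \<le> 2 * gg f u (-u)"
      proof -
        have "gg f u (-u) / u \<le> gg f u (-u) / (1/2)"
          using True by (intro frac_le gg_nonneg) auto
        then show ?thesis by simp
      qed
      then show ?thesis unfolding eq using True by (simp add: ennreal_leI)
    qed
  qed
  also have "\<dots> \<le> (\<integral>\<^sup>+u. \<integral>\<^sup>+v. 12 * Q f u v + 12 * Q f v (v + 1/2 - u) + 12 * Q f (v + 1/2 - u) (-u) \<partial>lborel \<partial>lborel)"
  proof (rule II_mono)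
    fix u v :: real
    show "indicator {1/2..1} u * indicator {0..1/2::real} v * ennreal (4 * gg f u (-u)) \<le>
      12 * Q f u v + 12 * Q f v (v + 1/2 - u) + 12 * Q f (v + 1/2 - u) (-u)"
    proof (cases "u \<in> {1/2..1} \<and> v \<in> {0..1/2}")
      case False
      then have z: "indicator {1/2..1} u * indicator {0..1/2::real} v * ennreal (4 * gg f u (-u)) = (0::ennreal)"
        by (auto split: split_indicator)
      show ?thesis by (subst z) simp
    next
      case True
      then show ?thesis using large_pt[of u v f] by simp
    qed
  qed
  also have "\<dots> = 12 * (\<integral>\<^sup>+u. \<integral>\<^sup>+v. Q f u v \<partial>lborel \<partial>lborel) + 12 * (\<integral>\<^sup>+u. \<integral>\<^sup>+v. Q f v (v + 1/2 - u) \<partial>lborel \<partial>lborel)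
     + 12 * (\<integral>\<^sup>+u. \<integral>\<^sup>+v. Q f (v + 1/2 - u) (-u) \<partial>lborel \<partial>lborel)"
    by (subst II_add, measurable)+ (simp add: II_cmult)
  also have "(\<integral>\<^sup>+u. \<integral>\<^sup>+v. Q f u v \<partial>lborel \<partial>lborel) = B0 f"
    unfolding B0_def ..
  also have "(\<integral>\<^sup>+u. \<integral>\<^sup>+v. Q f v (v + 1/2 - u) \<partial>lborel \<partial>lborel) = B0 f"
  proof -
    have "(\<integral>\<^sup>+u. \<integral>\<^sup>+v. Q f v (v + 1/2 - u) \<partial>lborel \<partial>lborel) = (\<integral>\<^sup>+v. \<integral>\<^sup>+u. Q f v (v + 1/2 - u) \<partial>lborel \<partial>lborel)"
      by (rule swap2[OF m2])
    also have "\<dots> = B0 f"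
      unfolding B0_def using inner_aff[OF m1, of "-1" "\<lambda>x. x + 1/2"] by simp
    finally show ?thesis .
  qed
  also have "(\<integral>\<^sup>+u. \<integral>\<^sup>+v. Q f (v + 1/2 - u) (-u) \<partial>lborel \<partial>lborel) = B0 f"
  proof -
    have m4[measurable]: "case_prod (\<lambda>u x. Q f x (-u)) \<in> borel_measurable BB" by measurable
    have m5[measurable]: "case_prod (\<lambda>x u. Q f x (-u)) \<in> borel_measurable BB" by measurable
    have "(\<integral>\<^sup>+u. \<integral>\<^sup>+v. Q f (v + 1/2 - u) (-u) \<partial>lborel \<partial>lborel) = (\<integral>\<^sup>+u. \<integral>\<^sup>+x. Q f x (-u) \<partial>lborel \<partial>lborel)"
      using inner_aff[OF m4, of 1 "\<lambda>u. 1/2 - u"] by (simp add: algebra_simps)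
    also have "\<dots> = (\<integral>\<^sup>+x. \<integral>\<^sup>+u. Q f x (-u) \<partial>lborel \<partial>lborel)"
      by (rule swap2[OF m4])
    also have "\<dots> = B0 f"
      unfolding B0_def using aff2[OF m1, of 1 "-1" 0 0] by simp
    finally show ?thesis .
  qed
  also have "12 * B0 f + 12 * B0 f + 12 * B0 f = 36 * B0 f"
    by (simp add: distrib_right[symmetric])
  finally show ?thesis .
qed

lemma V0_le:
  assumes fm[measurable]: "f \<in> borel_measurable borel"
  shows "V0 f \<le> 46 * B0 f"
proof -
  have "V0 f \<le> (\<integral>\<^sup>+u. indicator {0..1/2} u * ennreal (gg f u (-u) / u) + indicator {1/2..1} u * ennreal (gg f u (-u) / u) \<partial>lborel)"
    unfolding V0_def by (intro nn_integral_mono) (auto split: split_indicator)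
  also have "\<dots> = (\<integral>\<^sup>+u. indicator {0..1/2} u * ennreal (gg f u (-u) / u) \<partial>lborel) + (\<integral>\<^sup>+u. indicator {1/2..1} u * ennreal (gg f u (-u) / u) \<partial>lborel)"
    by (rule nn_integral_add) measurable
  also have "\<dots> \<le> 10 * B0 f + 36 * B0 f"
    by (intro add_mono small_int large_int fm)
  also have "\<dots> = 46 * B0 f" by (simp add: distrib_right[symmetric])
  finally show ?thesis .
qed



definition sh :: "(real \<Rightarrow> complex) \<Rightarrow> real \<Rightarrow> real \<Rightarrow> complex" where
  "sh f a = (\<lambda>x. f (a + x))"

lemma sh_meas[measurable]:
  assumes [measurable]: "f \<in> borel_measurable borel"
  shows "sh f a \<in> borel_measurable borel"
  unfolding sh_def by measurable

lemma ww_sh: "ww (sh f a) x y = ww f (a + x) (a + y)"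
  by (simp add: ww_def gg_def sh_def)

lemma transl:
  fixes h :: "real \<Rightarrow> real \<Rightarrow> ennreal"
  assumes "case_prod h \<in> borel_measurable BB"
  shows "(\<integral>\<^sup>+x. \<integral>\<^sup>+y. h x y \<partial>lborel \<partial>lborel) = (\<integral>\<^sup>+x. \<integral>\<^sup>+y. h (a + x) (a + y) \<partial>lborel \<partial>lborel)"
  using aff2[OF assms, of 1 1 a a] by simp

lemma Sq_sh:
  assumes [measurable]: "f \<in> borel_measurable borel"
  shows "Sq (a + b) f = Sq b (sh f a)"
proof -
  have m: "case_prod (\<lambda>x y. indicator {a+b..a+b+1} x * indicator {a+b..a+b+1} y * ww f x y :: ennreal) \<in> borel_measurable BB"
    by measurable
  show ?thesis unfolding Sq_def transl[OF m, of a]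
    by (intro nn_integral_cong) (auto simp: ww_sh split: split_indicator)
qed

definition Xa :: "real \<Rightarrow> (real \<Rightarrow> complex) \<Rightarrow> ennreal" where
  "Xa a f = (\<integral>\<^sup>+x. \<integral>\<^sup>+y. indicator {a-1..a} x * indicator {a..a+1} y * ww f x y \<partial>lborel \<partial>lborel)"

lemma Xa_sh:
  assumes [measurable]: "f \<in> borel_measurable borel"
  shows "Xa a f = X0 (sh f a)"
proof -
  have m: "case_prod (\<lambda>x y. indicator {a-1..a} x * indicator {a..a+1} y * ww f x y :: ennreal) \<in> borel_measurable BB"
    by measurable
  show ?thesis unfolding Xa_def X0_def transl[OF m, of a]
    by (intro nn_integral_cong) (auto simp: ww_sh split: split_indicator)
qed

definition Ba :: "real \<Rightarrow> (real \<Rightarrow> complex) \<Rightarrow> ennreal" where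
  "Ba a f = (\<integral>\<^sup>+x. \<integral>\<^sup>+y. indicator {a-2..a+2} x * indicator {a-2..a+2} y * indicator Strip (x,y) * ww f x y \<partial>lborel \<partial>lborel)"

lemma Ba_sh:
  assumes [measurable]: "f \<in> borel_measurable borel"
  shows "Ba a f = B0 (sh f a)"
proof -
  have m: "case_prod (\<lambda>x y. indicator {a-2..a+2} x * indicator {a-2..a+2} y * indicator Strip (x,y) * ww f x y :: ennreal) \<in> borel_measurable BB"
    unfolding Strip_def by measurable
  show ?thesis unfolding Ba_def B0_def Q_def transl[OF m, of a]
    by (intro nn_integral_cong) (auto simp: ww_sh Strip_def split: split_indicator)
qed

lemma Sq_le_Ba: "Sq a f \<le> Ba a f"
  unfolding Sq_def Ba_def
  by (intro nn_integral_mono) (auto simp: Strip_def split: split_indicator)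

definition AA :: "(real \<Rightarrow> complex) \<Rightarrow> ennreal" where
  "AA f = (\<integral>\<^sup>+x. \<integral>\<^sup>+y. indicator Strip (x,y) * ww f x y \<partial>lborel \<partial>lborel)"

lemma count_swap:
  fixes H :: "int \<Rightarrow> real \<Rightarrow> ennreal"
  assumes "\<And>k. H k \<in> borel_measurable borel"
  shows "(\<integral>\<^sup>+k. \<integral>\<^sup>+x. H k x \<partial>lborel \<partial>count_space UNIV) = (\<integral>\<^sup>+x. \<integral>\<^sup>+k. H k x \<partial>count_space UNIV \<partial>lborel)"
proof -
  interpret P: pair_sigma_finite "count_space (UNIV::int set)" lborel
    by (intro pair_sigma_finite.intro sigma_finite_measure_count_space lborel.sigma_finite_measure_axioms)
  have "case_prod H \<in> borel_measurable (count_space UNIV \<Otimes>\<^sub>M lborel)"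
    by (rule measurable_pair_measure_countable1) (use assms in auto)
  from P.Fubini'[OF this] show ?thesis by simp
qed

lemma count_le5: "(\<integral>\<^sup>+k. indicator {real_of_int k - 2 .. real_of_int k + 2} x \<partial>count_space UNIV) \<le> (5::ennreal)"
proof -
  define c where "c = \<lceil>x - 2\<rceil>"
  have "(\<integral>\<^sup>+k. indicator {real_of_int k - 2 .. real_of_int k + 2} x \<partial>count_space UNIV)
     \<le> (\<integral>\<^sup>+k. indicator {c..c+4} k \<partial>count_space UNIV)"
  proof (intro nn_integral_mono)
    fix k :: int
    show "indicator {real_of_int k - 2 .. real_of_int k + 2} x \<le> (indicator {c..c+4} k :: ennreal)"
    proof (cases "x \<in> {real_of_int k - 2 .. real_of_int k + 2}")
      case True
      then have "\<lceil>x\<rceil> \<le> k + 2" by (simp add: ceiling_le_iff)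
      then have "c \<le> k" unfolding c_def by simp
      moreover have "k \<le> c + 4"
      proof -
        have "x - 2 \<le> real_of_int c" unfolding c_def by simp
        then show ?thesis using True by simp
      qed
      ultimately show ?thesis using True by simp
    qed simp
  qed
  also have "\<dots> = 5" by simp
  finally show ?thesis .
qed



lemma sumBa_le:
  assumes fm[measurable]: "f \<in> borel_measurable borel"
  shows "(\<integral>\<^sup>+k. Ba (real_of_int k) f \<partial>count_space UNIV) \<le> 5 * AA f"
proof -
  define F where "F x = (\<integral>\<^sup>+y. indicator Strip (x,y) * ww f x y \<partial>lborel)" for x
  have mF0: "case_prod (\<lambda>x y. indicator Strip (x,y) * ww f x y :: ennreal) \<in> borel_measurable BB"
    unfolding Strip_def by measurable
  have mF[measurable]: "F \<in> borel_measurable borel"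
    unfolding F_def by (rule inner_meas[OF mF0])
  have "(\<integral>\<^sup>+k. Ba (real_of_int k) f \<partial>count_space UNIV)
     \<le> (\<integral>\<^sup>+k. \<integral>\<^sup>+x. indicator {real_of_int k - 2 .. real_of_int k + 2} x * F x \<partial>lborel \<partial>count_space UNIV)"
  proof (rule nn_integral_mono)
    fix k :: int
    show "Ba (real_of_int k) f \<le> (\<integral>\<^sup>+x. indicator {real_of_int k - 2 .. real_of_int k + 2} x * F x \<partial>lborel)"
      unfolding Ba_def
    proof (rule nn_integral_mono)
      fix x :: real
      have "(\<integral>\<^sup>+y. indicator {real_of_int k-2..real_of_int k+2} x * indicator {real_of_int k-2..real_of_int k+2} y * indicator Strip (x,y) * ww f x y \<partial>lborel)
        \<le> (\<integral>\<^sup>+y. indicator {real_of_int k-2..real_of_int k+2} x * (indicator Strip (x,y) * ww f x y) \<partial>lborel)"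
        by (intro nn_integral_mono) (auto split: split_indicator)
      also have "\<dots> = indicator {real_of_int k - 2 .. real_of_int k + 2} x * F x"
        unfolding F_def by (rule nn_integral_cmult) (use slice_meas[OF mF0] in auto)
      finally show "(\<integral>\<^sup>+y. indicator {real_of_int k-2..real_of_int k+2} x * indicator {real_of_int k-2..real_of_int k+2} y * indicator Strip (x,y) * ww f x y \<partial>lborel)
        \<le> indicator {real_of_int k - 2 .. real_of_int k + 2} x * F x" .
    qed
  qed
  also have "\<dots> = (\<integral>\<^sup>+x. \<integral>\<^sup>+k. indicator {real_of_int k - 2 .. real_of_int k + 2} x * F x \<partial>count_space UNIV \<partial>lborel)"
    by (rule count_swap) measurable
  also have "\<dots> = (\<integral>\<^sup>+x. (\<integral>\<^sup>+k. indicator {real_of_int k - 2 .. real_of_int k + 2} x \<partial>count_space UNIV) * F x \<partial>lborel)"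
    by (intro nn_integral_cong nn_integral_multc) auto
  also have "\<dots> \<le> (\<integral>\<^sup>+x. 5 * F x \<partial>lborel)"
    by (intro nn_integral_mono mult_right_mono count_le5) auto
  also have "\<dots> = 5 * AA f"
    unfolding AA_def F_def by (rule nn_integral_cmult) (use inner_meas[OF mF0] in auto)
  finally show ?thesis .
qed



lemma HT_eq:
  assumes fm[measurable]: "f \<in> borel_measurable borel"
  shows "H_tilde_R_sq f = AA f"
proof -
  have m: "(\<lambda>p. indicator {p. \<bar>fst p - snd p\<bar> \<le> 1} p *
        ennreal ((cmod (f (fst p) - f (snd p)))\<^sup>2 / (fst p - snd p)\<^sup>2)) \<in> borel_measurable BB"
    by measurable
  show ?thesis unfolding H_tilde_R_sq_def iter_eq_prod[OF m] AA_def
    by (simp add: Strip_def ww_def gg_def)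
qed

lemma HZ_eq:
  assumes fm[measurable]: "f \<in> borel_measurable borel"
  shows "H_Z_sq f = (\<integral>\<^sup>+k. Sq (real_of_int k) f \<partial>count_space UNIV) + (\<integral>\<^sup>+k. V0 (sh f (real_of_int k)) \<partial>count_space UNIV)"
proof -
  have a: "(\<integral>\<^sup>+ p. indicator ({real_of_int k..real_of_int k + 1} \<times> {real_of_int k..real_of_int k + 1}) p *
        ennreal ((cmod (f (fst p) - f (snd p)))\<^sup>2 / (fst p - snd p)\<^sup>2) \<partial>(lborel \<Otimes>\<^sub>M lborel)) = Sq (real_of_int k) f" for k
  proof -
    have m: "(\<lambda>p. indicator ({real_of_int k..real_of_int k + 1} \<times> {real_of_int k..real_of_int k + 1}) p *
        ennreal ((cmod (f (fst p) - f (snd p)))\<^sup>2 / (fst p - snd p)\<^sup>2)) \<in> borel_measurable BB"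
      by measurable
    show ?thesis unfolding iter_eq_prod[OF m] Sq_def
      by (simp add: ww_def gg_def indicator_times mult.assoc)
  qed
  have b: "(\<integral>\<^sup>+ t. indicator {0..1} t *
        ennreal ((cmod (f (real_of_int k + t) - f (real_of_int k - t)))\<^sup>2 / t) \<partial>lborel) = V0 (sh f (real_of_int k))" for k
    unfolding V0_def by (simp add: gg_def sh_def)
  show ?thesis unfolding H_Z_sq_def a b ..
qed

lemma pick:
  fixes G :: "int \<Rightarrow> ennreal"
  shows "G k0 \<le> (\<integral>\<^sup>+k. G k \<partial>count_space UNIV)"
proof -
  have "G k0 = (\<integral>\<^sup>+k. G k0 * indicator {k0} k \<partial>count_space UNIV)"
    by (subst nn_integral_cmult_indicator) auto
  also have "\<dots> \<le> (\<integral>\<^sup>+k. G k \<partial>count_space UNIV)"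
    by (intro nn_integral_mono) (auto split: split_indicator)
  finally show ?thesis .
qed

definition GG :: "(real \<Rightarrow> complex) \<Rightarrow> int \<Rightarrow> real \<Rightarrow> real \<Rightarrow> ennreal" where
  "GG f k x y = indicator {real_of_int k..real_of_int k+1} x * indicator {real_of_int k..real_of_int k+1} y * ww f x y
     + indicator {real_of_int k-1..real_of_int k} x * indicator {real_of_int k..real_of_int k+1} y * ww f x y
     + indicator {real_of_int k-1..real_of_int k} y * indicator {real_of_int k..real_of_int k+1} x * ww f x y"

lemma cover_half:
  assumes "x \<le> y" "y - x \<le> 1"
  shows "\<exists>k. ww f x y \<le> GG f k x y"
proof -
  define k0 where "k0 = \<lfloor>x\<rfloor>"
  have x1: "real_of_int k0 \<le> x" "x < real_of_int k0 + 1" unfolding k0_def by linarith+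
  show ?thesis
  proof (cases "y \<le> real_of_int k0 + 1")
    case True
    then have "ww f x y \<le> GG f k0 x y" using x1 assms unfolding GG_def by (auto split: split_indicator)
    then show ?thesis by blast
  next
    case False
    then have "ww f x y \<le> GG f (k0+1) x y" using x1 assms unfolding GG_def by (auto split: split_indicator)
    then show ?thesis by blast
  qed
qed

lemma cover:
  assumes "\<bar>x - y\<bar> \<le> 1"
  shows "\<exists>k. ww f x y \<le> GG f k x y"
proof (cases "x \<le> y")
  case True then show ?thesis using cover_half[of x y f] assms by auto
next
  case False
  then obtain k where "ww f y x \<le> GG f k y x" using cover_half[of y x f] assms by auto
  moreover have "ww f y x = ww f x y" by (simp add: ww_def gg_sym power2_commute)
  moreover have "GG f k y x \<le> GG f k x y"
  proof -
    have "GG f k y x = indicator {real_of_int k..real_of_int k+1} y * indicator {real_of_int k..real_of_int k+1} x * ww f x y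
     + indicator {real_of_int k-1..real_of_int k} y * indicator {real_of_int k..real_of_int k+1} x * ww f x y
     + indicator {real_of_int k-1..real_of_int k} x * indicator {real_of_int k..real_of_int k+1} y * ww f x y"
      unfolding GG_def by (simp add: ww_def gg_sym power2_commute)
    also have "\<dots> \<le> GG f k x y" unfolding GG_def by (simp add: mult.commute add_ac)
    finally show ?thesis .
  qed
  ultimately show ?thesis by (metis order_trans)
qed



lemma comb1:
  fixes s w m :: ennreal
  shows "s + (4 * w + 2 * m + 2 * s) + (4 * w + 2 * m + 2 * s) = 5 * s + 8 * w + 4 * m"
proof -
  have "s + (4 * w + 2 * m + 2 * s) + (4 * w + 2 * m + 2 * s) = (s + 2 * s + 2 * s) + (4 * w + 4 * w) + (2 * m + 2 * m)"
    by (simp only: add_ac)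
  also have "s + 2 * s + 2 * s = (1 + 2 + 2) * s" by (simp only: distrib_right mult_1)
  also have "4 * w + 4 * w = (4 + 4) * w" by (simp only: distrib_right)
  also have "2 * m + 2 * m = (2 + 2) * m" by (simp only: distrib_right)
  finally show ?thesis by simp
qed

lemma GG_meas[measurable]:
  assumes [measurable]: "f \<in> borel_measurable borel"
  shows "case_prod (GG f k) \<in> borel_measurable BB"
  unfolding GG_def by measurable

lemma Xa_le:
  assumes fm[measurable]: "f \<in> borel_measurable borel"
  shows "Xa a f \<le> 4 * V0 (sh f a) + 2 * Sq (a - 1) f + 2 * Sq a f"
proof -
  have "Xa a f = X0 (sh f a)" by (rule Xa_sh[OF fm])
  also have "\<dots> \<le> 4 * V0 (sh f a) + 2 * Sq (-1) (sh f a) + 2 * Sq 0 (sh f a)"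
    by (rule cross) measurable
  also have "Sq (-1) (sh f a) = Sq (a - 1) f" using Sq_sh[OF fm, of a "-1"] by simp
  also have "Sq 0 (sh f a) = Sq a f" using Sq_sh[OF fm, of a 0] by simp
  finally show ?thesis .
qed

lemma GG_int:
  assumes fm[measurable]: "f \<in> borel_measurable borel"
  shows "(\<integral>\<^sup>+x. \<integral>\<^sup>+y. GG f k x y \<partial>lborel \<partial>lborel) = Sq (real_of_int k) f + Xa (real_of_int k) f + Xa (real_of_int k) f"
proof -
  let ?a = "real_of_int k"
  have m3: "case_prod (\<lambda>x y. indicator {?a-1..?a} y * indicator {?a..?a+1} x * ww f x y :: ennreal) \<in> borel_measurable BB"
    by measurable
  have "(\<integral>\<^sup>+x. \<integral>\<^sup>+y. GG f k x y \<partial>lborel \<partial>lborel) =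
     Sq ?a f + Xa ?a f + (\<integral>\<^sup>+x. \<integral>\<^sup>+y. indicator {?a-1..?a} y * indicator {?a..?a+1} x * ww f x y \<partial>lborel \<partial>lborel)"
  proof -
    have m1: "case_prod (\<lambda>x y. indicator {?a..?a+1} x * indicator {?a..?a+1} y * ww f x y :: ennreal) \<in> borel_measurable BB"
      by measurable
    have m2: "case_prod (\<lambda>x y. indicator {?a-1..?a} x * indicator {?a..?a+1} y * ww f x y :: ennreal) \<in> borel_measurable BB"
      by measurable
    have m12: "case_prod (\<lambda>x y. indicator {?a..?a+1} x * indicator {?a..?a+1} y * ww f x y
       + indicator {?a-1..?a} x * indicator {?a..?a+1} y * ww f x y :: ennreal) \<in> borel_measurable BB"
      by measurable
    show ?thesis unfolding GG_def Sq_def Xa_def II_add[OF m12 m3] II_add[OF m1 m2] ..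
  qed
  also have "(\<integral>\<^sup>+x. \<integral>\<^sup>+y. indicator {?a-1..?a} y * indicator {?a..?a+1} x * ww f x y \<partial>lborel \<partial>lborel) = Xa ?a f"
    unfolding swap2[OF m3] Xa_def
    by (intro nn_integral_cong) (simp add: ww_def gg_sym power2_commute mult.commute)
  finally show ?thesis .
qed

lemma lower:
  assumes fm[measurable]: "f \<in> borel_measurable borel"
  shows "AA f \<le> 9 * H_Z_sq f"
proof -
  define S where "S = (\<integral>\<^sup>+k. Sq (real_of_int k) f \<partial>count_space UNIV)"
  define V where "V = (\<integral>\<^sup>+k. V0 (sh f (real_of_int k)) \<partial>count_space UNIV)"
  have "AA f \<le> (\<integral>\<^sup>+x. \<integral>\<^sup>+y. \<integral>\<^sup>+k. GG f k x y \<partial>count_space UNIV \<partial>lborel \<partial>lborel)"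
    unfolding AA_def
  proof (intro nn_integral_mono)
    fix x y :: real
    show "indicator Strip (x, y) * ww f x y \<le> (\<integral>\<^sup>+k. GG f k x y \<partial>count_space UNIV)"
    proof (cases "(x,y) \<in> Strip")
      case True
      then obtain k where "ww f x y \<le> GG f k x y" using cover[of x y f] by (auto simp: Strip_def)
      also have "\<dots> \<le> (\<integral>\<^sup>+k. GG f k x y \<partial>count_space UNIV)" by (rule pick)
      finally show ?thesis using True by simp
    qed simp
  qed
  also have "\<dots> = (\<integral>\<^sup>+x. \<integral>\<^sup>+k. \<integral>\<^sup>+y. GG f k x y \<partial>lborel \<partial>count_space UNIV \<partial>lborel)"
    by (intro nn_integral_cong count_swap[symmetric] slice_meas[OF GG_meas[OF fm]])
  also have "\<dots> = (\<integral>\<^sup>+k. \<integral>\<^sup>+x. \<integral>\<^sup>+y. GG f k x y \<partial>lborel \<partial>lborel \<partial>count_space UNIV)"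
    by (intro count_swap[symmetric] inner_meas[OF GG_meas[OF fm]])
  also have "\<dots> = (\<integral>\<^sup>+k. Sq (real_of_int k) f + Xa (real_of_int k) f + Xa (real_of_int k) f \<partial>count_space UNIV)"
    by (intro nn_integral_cong GG_int fm)
  also have "\<dots> \<le> (\<integral>\<^sup>+k. 5 * Sq (real_of_int k) f + 8 * V0 (sh f (real_of_int k)) + 4 * Sq (real_of_int (k - 1)) f \<partial>count_space UNIV)"
  proof (intro nn_integral_mono)
    fix k :: int
    let ?a = "real_of_int k"
    have "Sq ?a f + Xa ?a f + Xa ?a f \<le> Sq ?a f + (4 * V0 (sh f ?a) + 2 * Sq (?a - 1) f + 2 * Sq ?a f)
        + (4 * V0 (sh f ?a) + 2 * Sq (?a - 1) f + 2 * Sq ?a f)"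
      by (intro add_mono Xa_le fm order_refl)
    also have "\<dots> = 5 * Sq ?a f + 8 * V0 (sh f ?a) + 4 * Sq (?a - 1) f"
      by (rule comb1)
    finally show "Sq ?a f + Xa ?a f + Xa ?a f \<le> 5 * Sq ?a f + 8 * V0 (sh f ?a) + 4 * Sq (real_of_int (k - 1)) f"
      by simp
  qed
  also have "\<dots> = 5 * S + 8 * V + 4 * (\<integral>\<^sup>+k. Sq (real_of_int (k - 1)) f \<partial>count_space UNIV)"
    unfolding S_def V_def
    by (simp add: nn_integral_add nn_integral_cmult)
  also have "(\<integral>\<^sup>+k. Sq (real_of_int (k - 1)) f \<partial>count_space UNIV) = S"
  proof -
    have "bij_betw (\<lambda>k::int. k - 1) UNIV UNIV"
      by (rule bij_betwI[where g="\<lambda>k. k + 1"]) auto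
    from nn_integral_bij_count_space[OF this, of "\<lambda>k. Sq (real_of_int k) f"] show ?thesis
      unfolding S_def by simp
  qed
  also have "5 * S + 8 * V + 4 * S \<le> 9 * (S + V)"
  proof -
    have "5 * S + 8 * V + 4 * S = (5 * S + 4 * S) + 8 * V"
      by (simp only: add_ac)
    also have "5 * S + 4 * S = 9 * S"
      by (subst distrib_right[symmetric]) simp
    finally have "5 * S + 8 * V + 4 * S = 9 * S + 8 * V" .
    also have "\<dots> \<le> 9 * S + 9 * V"
      by (intro add_left_mono mult_right_mono) auto
    finally show ?thesis by (simp add: distrib_left)
  qed
  also have "S + V = H_Z_sq f" unfolding S_def V_def by (rule HZ_eq[symmetric, OF fm])
  finally show ?thesis .
qed



lemma upper:
  assumes fm[measurable]: "f \<in> borel_measurable borel"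
  shows "H_Z_sq f \<le> 235 * AA f"
proof -
  define BS where "BS = (\<integral>\<^sup>+k. Ba (real_of_int k) f \<partial>count_space UNIV)"
  have "H_Z_sq f = (\<integral>\<^sup>+k. Sq (real_of_int k) f \<partial>count_space UNIV) + (\<integral>\<^sup>+k. V0 (sh f (real_of_int k)) \<partial>count_space UNIV)"
    by (rule HZ_eq[OF fm])
  also have "\<dots> \<le> BS + (\<integral>\<^sup>+k. 46 * Ba (real_of_int k) f \<partial>count_space UNIV)"
    unfolding BS_def
  proof (intro add_mono nn_integral_mono Sq_le_Ba)
    fix k :: int
    have "V0 (sh f (real_of_int k)) \<le> 46 * B0 (sh f (real_of_int k))"
      by (rule V0_le) measurable
    then show "V0 (sh f (real_of_int k)) \<le> 46 * Ba (real_of_int k) f"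
      by (simp add: Ba_sh[OF fm])
  qed
  also have "(\<integral>\<^sup>+k. 46 * Ba (real_of_int k) f \<partial>count_space UNIV) = 46 * BS"
    unfolding BS_def by (rule nn_integral_cmult) simp
  also have "BS + 46 * BS = 47 * BS"
  proof -
    have "BS + 46 * BS = (1 + 46) * BS" by (simp only: distrib_right mult_1)
    then show ?thesis by simp
  qed
  also have "47 * BS \<le> 47 * (5 * AA f)"
    unfolding BS_def by (intro mult_left_mono sumBa_le fm) simp
  also have "47 * (5 * AA f) = 235 * AA f"
    by (simp add: mult.assoc[symmetric])
  finally show ?thesis .
qed

theorem theorem2p4:
  shows "\<exists>c::real. c > 0 \<and> (\<forall>f. locally_L2 f \<longrightarrow>
           ennreal (1 / c) * H_tilde_R_sq f \<le> H_Z_sq f \<and>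
           H_Z_sq f \<le> ennreal c * H_tilde_R_sq f)"
proof (intro exI[of _ 235] conjI allI impI)
  fix f
  assume "locally_L2 f"
  then have fm: "f \<in> borel_measurable borel" by (simp add: locally_L2_def)
  have "ennreal (1/235) * H_tilde_R_sq f = ennreal (1/235) * AA f" by (simp add: HT_eq[OF fm])
  also have "\<dots> \<le> ennreal (1/235) * (9 * H_Z_sq f)"
    by (intro mult_left_mono lower fm) simp
  also have "\<dots> = (ennreal (1/235) * ennreal 9) * H_Z_sq f" by (simp add: mult.assoc)
  also have "ennreal (1/235) * ennreal 9 = ennreal (9/235)"
    by (subst ennreal_mult''[symmetric]) auto
  also have "ennreal (9/235) * H_Z_sq f \<le> 1 * H_Z_sq f"
    by (intro mult_right_mono) (auto simp: ennreal_le_1)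
  finally show "ennreal (1 / 235) * H_tilde_R_sq f \<le> H_Z_sq f" by simp
  have "H_Z_sq f \<le> 235 * AA f" by (rule upper[OF fm])
  then show "H_Z_sq f \<le> ennreal 235 * H_tilde_R_sq f" by (simp add: HT_eq[OF fm])
qed simp

end
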